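(* For every integer $m \ge 2$, the imbalanced $(m,3)$-RPS game is strongly playable: in every (mixed-strategy) Nash equilibrium of this game, each of the three objects $R$, $P$, $S$ is played with positive probability by at least one player.
   Context: An $(m,n)$-RPS game is a symmetric, zero-sum, win/lose game with $m$ players and $n$ pure strategies ("objects"), played without collusion, in which each player independently chooses an object. The rules assign to every multiset $c$ of $m$ chosen objects a single winning object $\phi(c) \in c$; every player who chose $\phi(c)$ wins and every other player loses. If there are $m'$ winners, each winner receives payoff $\frac{m-m'}{m'}$ and each loser receives payoff $-1$. Players use mixed strategies (independent probability distributions over the objects), and Nash equilibria are taken in mixed strategies. The imbalanced $(m,3)$-RPS has objects $R,P,S$ with the following rules: any multiset containing at least one $S$ and at least one $R$ is won by $R$; any multiset containing only $R$'s and $P$'s (with at least one $P$ and at least one $R$) is won by $P$; any multiset containing only $P$'s and $S$'s (with at least one of each) is won by $S$; a multiset consisting of a single object type is won by that object. A game is strongly playable if in every Nash equilibrium every object is played with positive probability by at least one player. *)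

theory Defs
  imports Complex_Main "HOL-Library.FuncSet"
begin

datatype obj = R | P | S

text \<open>Winning object of the set of object types present in a play (the rules depend on the
multiset of choices only through which object types occur).\<close>
definition rps_winner :: "obj set \<Rightarrow> obj" where
  "rps_winner A =
     (if R \<in> A \<and> S \<in> A then R
      else if A \<subseteq> {R, P} \<and> R \<in> A \<and> P \<in> A then P
      else if A \<subseteq> {P, S} \<and> P \<in> A \<and> S \<in> A then S
      else (THE x. A = {x}))"

definition winner :: "nat \<Rightarrow> (nat \<Rightarrow> obj) \<Rightarrow> obj" where
  "winner m c = rps_winner (c ` {..<m})"

definition num_winners :: "nat \<Rightarrow> (nat \<Rightarrow> obj) \<Rightarrow> nat" where
  "num_winners m c = card {j \<in> {..<m}. c j = winner m c}"

definition pure_payoff :: "nat \<Rightarrow> (nat \<Rightarrow> obj) \<Rightarrow> nat \<Rightarrow> real" where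
  "pure_payoff m c i =
     (if c i = winner m c
      then (real m - real (num_winners m c)) / real (num_winners m c)
      else -1)"

definition mixed_strategy :: "(obj \<Rightarrow> real) \<Rightarrow> bool" where
  "mixed_strategy p \<longleftrightarrow> (\<forall>x. p x \<ge> 0) \<and> p R + p P + p S = 1"

definition exp_payoff :: "nat \<Rightarrow> (nat \<Rightarrow> obj \<Rightarrow> real) \<Rightarrow> nat \<Rightarrow> real" where
  "exp_payoff m \<sigma> i =
     (\<Sum>c \<in> PiE {..<m} (\<lambda>_. UNIV). (\<Prod>j<m. \<sigma> j (c j)) * pure_payoff m c i)"

definition nash_eq :: "nat \<Rightarrow> (nat \<Rightarrow> obj \<Rightarrow> real) \<Rightarrow> bool" where
  "nash_eq m \<sigma> \<longleftrightarrow>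
     (\<forall>j<m. mixed_strategy (\<sigma> j)) \<and>
     (\<forall>i<m. \<forall>\<tau>. mixed_strategy \<tau> \<longrightarrow> exp_payoff m (\<sigma>(i := \<tau>)) i \<le> exp_payoff m \<sigma> i)"

definition strongly_playable :: "nat \<Rightarrow> bool" where
  "strongly_playable m \<longleftrightarrow>
     (\<forall>\<sigma>. nash_eq m \<sigma> \<longrightarrow> (\<forall>x. \<exists>i<m. \<sigma> i x > 0))"

end

theory Submission
  imports Defs
begin

definition domo :: "obj \<Rightarrow> obj" where
  "domo x = (case x of S \<Rightarrow> P | R \<Rightarrow> S | P \<Rightarrow> R)"

lemma univ_obj: "UNIV = {R, P, S}"
  using obj.exhaust by auto

lemma sub3: "A \<subseteq> {R, P, S}"
  using univ_obj by auto

lemma single_of: "A \<noteq> {} \<Longrightarrow> A \<subseteq> {y} \<Longrightarrow> A = {y}"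
  by auto

lemma winner_in: "A \<noteq> {} \<Longrightarrow> rps_winner A \<in> A"
proof -
  assume ne: "A \<noteq> {}"
  have s: "A \<subseteq> {R, P, S}" by (rule sub3)
  show ?thesis
  proof (cases "R \<in> A"; cases "P \<in> A"; cases "S \<in> A")
    assume "R \<in> A" "P \<notin> A" "S \<notin> A"
    then have "A = {R}" using s ne by (intro single_of) auto
    then show ?thesis by (simp add: rps_winner_def)
  next
    assume "R \<notin> A" "P \<in> A" "S \<notin> A"
    then have "A = {P}" using s ne by (intro single_of) auto
    then show ?thesis by (simp add: rps_winner_def)
  next
    assume "R \<notin> A" "P \<notin> A" "S \<in> A"
    then have "A = {S}" using s ne by (intro single_of) auto
    then show ?thesis by (simp add: rps_winner_def)
  next
    assume "R \<notin> A" "P \<notin> A" "S \<notin> A"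
    then have False using s ne by auto
    then show ?thesis ..
  qed (use s in \<open>auto simp: rps_winner_def\<close>)
qed

lemma win_dom: "x \<notin> A \<Longrightarrow> domo x \<in> A \<Longrightarrow> rps_winner A = domo x"
proof -
  assume a: "x \<notin> A" "domo x \<in> A"
  have s: "A \<subseteq> {R, P, S}" by (rule sub3)
  show ?thesis
  proof (cases x)
    case R
    then have "A \<subseteq> {P, S}" "S \<in> A" using a s by (auto simp: domo_def)
    then show ?thesis using R
      by (cases "P \<in> A") (auto simp: rps_winner_def domo_def single_of)
  next
    case P
    then have "A \<subseteq> {R, S}" "R \<in> A" using a s by (auto simp: domo_def)
    then show ?thesis using P
      by (cases "S \<in> A") (auto simp: rps_winner_def domo_def single_of)
  next
    case S
    then have "A \<subseteq> {R, P}" "P \<in> A" using a s by (auto simp: domo_def)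
    then show ?thesis using S
      by (cases "R \<in> A") (auto simp: rps_winner_def domo_def single_of)
  qed
qed

lemma win_pair: "rps_winner {x, domo x} = x"
  by (cases x) (auto simp: rps_winner_def domo_def)


instance obj :: finite
  by standard (simp add: univ_obj)

lemma finPI: "finite (PiE {..<m::nat} (\<lambda>_. UNIV :: obj set))"
  by (rule finite_PiE) auto

lemma pos_sum:
  fixes f :: "'a \<Rightarrow> real"
  assumes "finite A" "\<And>c. c \<in> A \<Longrightarrow> 0 \<le> f c" "c0 \<in> A" "f c0 > 0"
  shows "sum f A > 0"
proof -
  have "f c0 \<le> sum f A" using assms by (intro member_le_sum) auto
  then show ?thesis using assms(4) by linarith
qed

lemma zero_sum:
  assumes "m > 0"
  shows "(\<Sum>i<m. pure_payoff m c i) = 0"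
proof -
  define W where "W = {j \<in> {..<m}. c j = winner m c}"
  have ne: "c ` {..<m} \<noteq> {}" using assms by auto
  have "winner m c \<in> c ` {..<m}" unfolding winner_def using winner_in[OF ne] .
  then have "W \<noteq> {}" unfolding W_def by auto
  moreover have fW: "finite W" unfolding W_def by auto
  ultimately have nw: "num_winners m c > 0" unfolding num_winners_def W_def[symmetric]
    by (simp add: card_gt_0_iff)
  have WI: "{..<m} \<inter> {i. c i = winner m c} = W" unfolding W_def by auto
  have WD: "{..<m} \<inter> - {i. c i = winner m c} = {..<m} - W" unfolding W_def by auto
  have cW: "card W = num_winners m c" unfolding num_winners_def W_def ..
  have cD: "card ({..<m} - W) = m - num_winners m c"
    using cW by (subst card_Diff_subset) (auto simp: W_def)
  have le: "num_winners m c \<le> m" using cW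
    by (metis (no_types, lifting) W_def card_lessThan card_mono finite_lessThan mem_Collect_eq subsetI)
  have "(\<Sum>i<m. pure_payoff m c i) =
     (\<Sum>i<m. if c i = winner m c then (real m - real (num_winners m c)) / real (num_winners m c) else -1)"
    unfolding pure_payoff_def ..
  also have "\<dots> = real (card W) * ((real m - real (num_winners m c)) / real (num_winners m c))
       - real (card ({..<m} - W))"
    by (subst sum.If_cases) (auto simp: WI WD)
  also have "\<dots> = 0" using nw le by (simp add: cW cD of_nat_diff)
  finally show ?thesis .
qed

lemma exp_sum_zero:
  assumes "m > 0"
  shows "(\<Sum>i<m. exp_payoff m \<sigma> i) = 0"
proof -
  have "(\<Sum>i<m. exp_payoff m \<sigma> i) =
    (\<Sum>c \<in> PiE {..<m} (\<lambda>_. UNIV). (\<Prod>j<m. \<sigma> j (c j)) * (\<Sum>i<m. pure_payoff m c i))"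
    unfolding exp_payoff_def by (subst sum.swap) (simp add: sum_distrib_left)
  also have "\<dots> = 0" using zero_sum[OF assms] by simp
  finally show ?thesis .
qed


lemma domo_ne: "domo x \<noteq> x"
  by (cases x) (auto simp: domo_def)

theorem mainTheorem1:
  fixes m :: nat
  assumes "m \<ge> 2"
  shows "strongly_playable m"
  unfolding strongly_playable_def
proof (rule allI, rule impI)
  fix \<sigma> assume ne: "nash_eq m \<sigma>"
  have ms: "\<And>j. j < m \<Longrightarrow> mixed_strategy (\<sigma> j)" using ne by (simp add: nash_eq_def)
  have dev: "\<And>i \<tau>. i < m \<Longrightarrow> mixed_strategy \<tau> \<Longrightarrow> exp_payoff m (\<sigma>(i := \<tau>)) i \<le> exp_payoff m \<sigma> i"
    using ne by (simp add: nash_eq_def)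
  have nn: "\<And>j y. j < m \<Longrightarrow> 0 \<le> \<sigma> j y" using ms by (simp add: mixed_strategy_def)
  have s1: "\<And>j. j < m \<Longrightarrow> \<sigma> j R + \<sigma> j P + \<sigma> j S = 1" using ms by (simp add: mixed_strategy_def)
  have ex_pos: "\<And>j. j < m \<Longrightarrow> \<exists>z. \<sigma> j z > 0"
  proof (rule ccontr)
    fix j assume "j < m" "\<not> (\<exists>z. \<sigma> j z > 0)"
    then have "\<sigma> j R \<le> 0" "\<sigma> j P \<le> 0" "\<sigma> j S \<le> 0" by (auto simp: not_less)
    then show False using s1[of j] \<open>j < m\<close> by linarith
  qed
  define pick where "pick k = (SOME z. \<sigma> k z > 0)" for k
  have pick: "\<And>k. k < m \<Longrightarrow> \<sigma> k (pick k) > 0" unfolding pick_def using ex_pos by (metis someI_ex)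
  show "\<forall>x. \<exists>i<m. 0 < \<sigma> i x"
  proof (rule ccontr)
    assume "\<not> (\<forall>x. \<exists>i<m. 0 < \<sigma> i x)"
    then obtain x where "\<forall>i<m. \<not> 0 < \<sigma> i x" by blast
    then have x0: "\<And>i. i < m \<Longrightarrow> \<sigma> i x = 0" using nn by (metis not_less order.antisym)
    define d where "d = domo x"
    have dx: "d \<noteq> x" unfolding d_def by (rule domo_ne)
    define td where "td = (\<lambda>y. if y = d then 1 else 0 :: real)"
    define tx where "tx = (\<lambda>y. if y = x then 1 else 0 :: real)"
    have mtd: "mixed_strategy td" unfolding td_def mixed_strategy_def by (cases d) auto
    have mtx: "mixed_strategy tx" unfolding tx_def mixed_strategy_def by (cases x) auto
    let ?PI = "PiE {..<m} (\<lambda>_. UNIV :: obj set)"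
    have term_nn: "0 \<le> (\<Prod>j<m. (\<sigma>(i := td)) j (c j)) * pure_payoff m c i"
      if i: "i < m" and c: "c \<in> ?PI" for i c
    proof (cases "(\<Prod>j<m. (\<sigma>(i := td)) j (c j)) = 0")
      case True then show ?thesis by (metis mult_zero_left order_refl)
    next
      case False
      then have f: "\<And>j. j < m \<Longrightarrow> (\<sigma>(i := td)) j (c j) \<noteq> 0"
        by (simp add: prod_zero_iff)
      have ci: "c i = d" using f[OF i] by (simp add: td_def split: if_splits)
      have cx: "x \<notin> c ` {..<m}"
      proof
        assume "x \<in> c ` {..<m}"
        then obtain j where j: "j < m" "c j = x" by auto
        show False
        proof (cases "j = i")
          case True then show False using ci j dx by simp
        next
          case False then show False using f[OF j(1)] j x0 by simp
        qed
      qed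
      have "d \<in> c ` {..<m}" using ci i by force
      then have w: "winner m c = d" unfolding winner_def d_def using cx win_dom d_def by auto
      have le: "num_winners m c \<le> m" unfolding num_winners_def
        by (metis (no_types, lifting) card_lessThan card_mono finite_lessThan mem_Collect_eq subsetI)
      have "0 \<le> pure_payoff m c i" unfolding pure_payoff_def using ci w le by simp
      moreover have "0 \<le> (\<Prod>j<m. (\<sigma>(i := td)) j (c j))"
        by (rule prod_nonneg) (auto simp: td_def nn)
      ultimately show ?thesis by simp
    qed
    have c1: "\<And>i. i < m \<Longrightarrow> 0 \<le> exp_payoff m (\<sigma>(i := td)) i"
      unfolding exp_payoff_def by (rule sum_nonneg) (rule term_nn)
    have c2: "\<And>i. i < m \<Longrightarrow> 0 \<le> exp_payoff m \<sigma> i" using c1 dev mtd by (meson order_trans)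
    have "(\<Sum>i<m. exp_payoff m \<sigma> i) = 0" using assms by (intro exp_sum_zero) simp
    then have c3: "\<And>i. i < m \<Longrightarrow> exp_payoff m \<sigma> i = 0"
      using c2 by (subst (asm) sum_nonneg_eq_0_iff) auto
    have c4: "\<sigma> j y = 0" if i: "i < m" and j: "j < m" "j \<noteq> i" and y: "y \<noteq> d" for i j y
    proof (rule ccontr)
      assume "\<sigma> j y \<noteq> 0"
      then have yp: "\<sigma> j y > 0" using nn[OF j(1), of y] by linarith
      then have yx: "y \<noteq> x" using x0 j by auto
      define c0 where "c0 = restrict (\<lambda>k. if k = i then d else if k = j then y else pick k) {..<m}"
      have c0PI: "c0 \<in> ?PI" unfolding c0_def by simp
      have wp: "(\<Prod>k<m. (\<sigma>(i := td)) k (c0 k)) > 0"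
        by (rule prod_pos) (auto simp: c0_def td_def yp pick)
      have cx: "x \<notin> c0 ` {..<m}"
      proof
        assume "x \<in> c0 ` {..<m}"
        then obtain k where k: "k < m" "c0 k = x" by auto
        show False using k pick[OF k(1)] x0[OF k(1)] dx yx
          by (auto simp: c0_def split: if_splits)
      qed
      have "d \<in> c0 ` {..<m}" using i by (force simp: c0_def)
      then have w: "winner m c0 = d" unfolding winner_def d_def using cx win_dom d_def by auto
      have Wsub: "{k \<in> {..<m}. c0 k = winner m c0} \<subseteq> {..<m} - {j}"
        using w y j by (auto simp: c0_def)
      have "card {k \<in> {..<m}. c0 k = winner m c0} \<le> card ({..<m} - {j})"
        by (rule card_mono[OF _ Wsub]) auto
      then have le: "num_winners m c0 < m" unfolding num_winners_def using j by simp
      have "i \<in> {k \<in> {..<m}. c0 k = winner m c0}" using i w by (simp add: c0_def)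
      then have gt: "num_winners m c0 > 0" unfolding num_winners_def
        by (subst card_gt_0_iff) auto
      have "c0 i = winner m c0" using w i by (simp add: c0_def)
      then have "pure_payoff m c0 i > 0" unfolding pure_payoff_def using le gt by simp
      then have "(\<Prod>k<m. (\<sigma>(i := td)) k (c0 k)) * pure_payoff m c0 i > 0" using wp by simp
      then have "exp_payoff m (\<sigma>(i := td)) i > 0"
        unfolding exp_payoff_def by (intro pos_sum[OF finPI _ c0PI]) (rule term_nn[OF i])
      then show False using dev[OF i mtd] c3[OF i] by simp
    qed
    have c5: "\<And>j y. j < m \<Longrightarrow> y \<noteq> d \<Longrightarrow> \<sigma> j y = 0"
    proof -
      fix j y assume j: "j < m" and y: "y \<noteq> d"
      define i where "i = (if j = 0 then 1 else 0 :: nat)"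
      have "i < m" "j \<noteq> i" using assms j by (auto simp: i_def)
      then show "\<sigma> j y = 0" using c4 j y by blast
    qed
    have c6: "\<And>j. j < m \<Longrightarrow> \<sigma> j d = 1"
    proof -
      fix j assume j: "j < m"
      show "\<sigma> j d = 1" using s1[OF j] c5[OF j] by (cases d) auto
    qed
    have m0: "0 < m" and m1: "1 < m" using assms by auto
    define c0 where "c0 = restrict (\<lambda>k. if k = 0 then x else d) {..<m}"
    have c0PI: "c0 \<in> ?PI" unfolding c0_def by simp
    have wp: "(\<Prod>k<m. (\<sigma>(0 := tx)) k (c0 k)) > 0"
      by (rule prod_pos) (auto simp: c0_def tx_def c6)
    have im: "c0 ` {..<m} = {x, d}"
    proof
      show "c0 ` {..<m} \<subseteq> {x, d}" by (auto simp: c0_def)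
      have "c0 0 = x" "c0 1 = d" using m0 m1 by (auto simp: c0_def)
      then show "{x, d} \<subseteq> c0 ` {..<m}" using m0 m1 by (metis empty_subsetI imageI insert_subset lessThan_iff)
    qed
    have w: "winner m c0 = x" unfolding winner_def im d_def by (rule win_pair)
    have W: "{k \<in> {..<m}. c0 k = winner m c0} = {0}" using w dx m0 by (auto simp: c0_def)
    have "pure_payoff m c0 0 > 0" unfolding pure_payoff_def num_winners_def W
      using w m1 by (simp add: c0_def m0)
    then have tp: "(\<Prod>k<m. (\<sigma>(0 := tx)) k (c0 k)) * pure_payoff m c0 0 > 0" using wp by simp
    have other: "0 \<le> (\<Prod>k<m. (\<sigma>(0 := tx)) k (c k)) * pure_payoff m c 0" if c: "c \<in> ?PI" for c
    proof (cases "c = c0")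
      case True then show ?thesis using tp by simp
    next
      case False
      then obtain k where k: "k < m" "c k \<noteq> c0 k" using PiE_ext[OF c c0PI] by auto
      have "(\<sigma>(0 := tx)) k (c k) = 0"
        using k c5 by (auto simp: c0_def tx_def split: if_splits)
      then have "(\<Prod>k<m. (\<sigma>(0 := tx)) k (c k)) = 0" using k
        by (metis finite_lessThan lessThan_iff prod_zero_iff)
      then show ?thesis by (metis mult_zero_left order_refl)
    qed
    have "exp_payoff m (\<sigma>(0 := tx)) 0 > 0"
      using tp unfolding exp_payoff_def by (intro pos_sum[OF finPI _ c0PI]) (rule other)
    then show False using dev[OF m0 mtx] c3[OF m0] by simp
  qed
qed

end
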